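(* Let $R$ be a noetherian ring and $M$ a finitely generated $R$-module. (i) $\mathrm{Fitt}^0_R(M)\subseteq\mathrm{char}_R(M)$. (ii) If the projective dimension of $M$ is at most $1$, then $\mathrm{Fitt}^0_R(M)=\mathrm{char}_R(M)$.
   Context: $M^*=\mathrm{Hom}_R(M,R)$, $\bigcap^n_RM=(\bigwedge^n_R(M^* ))^*$. For a finitely generated $R$-module $M$, choose $n>0$ and an exact sequence $0\to N\to R^n\to M\to0$ and set $\mathrm{char}_R(M)=\mathrm{im}(\bigcap^n_RN\to\bigcap^n_RR^n=R)$ (independent of the choice). $\mathrm{Fitt}^0_R$ is the zeroth Fitting ideal. *)

theory Defs
  imports "HOL-Analysis.Analysis"
begin

text \<open>Commutative rings are modelled by the type class comm_ring_1; ideals of R are the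
  subspaces of R regarded as a module over itself via multiplication.\<close>

definition noetherian_ring :: "'a::comm_ring_1 itself \<Rightarrow> bool" where
  "noetherian_ring _ \<longleftrightarrow>
     (\<forall>I::'a set. module.subspace (*) I \<longrightarrow> (\<exists>S. finite S \<and> I = module.span (*) S))"

text \<open>R^n is modelled as 'a^'n (n = CARD('n)).  A submodule N of R^n (the relations of a
  presentation 0 -> N -> R^n -> M -> 0).\<close>

text \<open>Zeroth Fitting ideal of R^n/N: the ideal generated by all n x n minors of the relation
  matrix, i.e. by the determinants of all n-tuples of elements of N.\<close>
definition fitt0 :: "('a::comm_ring_1 ^ 'n) set \<Rightarrow> 'a set" where
  "fitt0 N = module.span (*) {det (\<chi> i. v i) | v :: 'n \<Rightarrow> 'a ^ 'n. \<forall>i. v i \<in> N}"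

text \<open>The dual N^* = Hom_R(N,R), elements represented as functions on R^n vanishing off N.\<close>
definition dual_sub :: "('a::comm_ring_1 ^ 'n) set \<Rightarrow> ('a ^ 'n \<Rightarrow> 'a) set" where
  "dual_sub N = {f. (\<forall>x\<in>N. \<forall>y\<in>N. f (x + y) = f x + f y)
                  \<and> (\<forall>c. \<forall>x\<in>N. f (c *s x) = c * f x)
                  \<and> (\<forall>x. x \<notin> N \<longrightarrow> f x = 0)}"

text \<open>Elements of the n-th Bass-Rosenberg power of N, (wedge^n (N^*))^*, are identified with
  alternating n-linear forms on N^*, the n arguments indexed by 'n.\<close>
definition alt_multilinear ::
    "('a::comm_ring_1 ^ 'n) set \<Rightarrow> (('n \<Rightarrow> ('a ^ 'n \<Rightarrow> 'a)) \<Rightarrow> 'a) \<Rightarrow> bool" where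
  "alt_multilinear N \<Phi> \<longleftrightarrow>
     (\<forall>g. (\<forall>i. g i \<in> dual_sub N) \<longrightarrow>
        (\<forall>i. (\<forall>h1\<in>dual_sub N. \<forall>h2\<in>dual_sub N.
                 \<Phi> (g(i := (\<lambda>x. h1 x + h2 x))) = \<Phi> (g(i := h1)) + \<Phi> (g(i := h2)))
           \<and> (\<forall>c. \<forall>h\<in>dual_sub N. \<Phi> (g(i := (\<lambda>x. c * h x))) = c * \<Phi> (g(i := h))))
      \<and> ((\<exists>i j. i \<noteq> j \<and> g i = g j) \<longrightarrow> \<Phi> g = 0))"

text \<open>char_R(R^n/N): image of bigcap^n N -> bigcap^n R^n = R.  The latter identification is
  evaluation at e_1^* wedge ... wedge e_n^*; the map restricts the coordinate functionals to N.\<close>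
definition char_ideal :: "('a::comm_ring_1 ^ 'n) set \<Rightarrow> 'a set" where
  "char_ideal N = {\<Phi> (\<lambda>i x. if x \<in> N then x $ i else 0) | \<Phi>. alt_multilinear N \<Phi>}"

text \<open>N is a projective module (finitely generated case): a direct summand of some R^m,
  R^m modelled as functions nat => 'a vanishing from m on.\<close>
definition fg_projective :: "('a::comm_ring_1 ^ 'n) set \<Rightarrow> bool" where
  "fg_projective N \<longleftrightarrow>
     (\<exists>(m::nat) (i :: 'a ^ 'n \<Rightarrow> (nat \<Rightarrow> 'a)) (p :: (nat \<Rightarrow> 'a) \<Rightarrow> 'a ^ 'n).
        (\<forall>x\<in>N. \<forall>y\<in>N. i (x + y) = (\<lambda>k. i x k + i y k)) \<and> (\<forall>c. \<forall>x\<in>N. i (c *s x) = (\<lambda>k. c * i x k))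
      \<and> (\<forall>x\<in>N. \<forall>k\<ge>m. i x k = 0)
      \<and> (\<forall>u v. p (\<lambda>k. u k + v k) = p u + p v) \<and> (\<forall>c u. p (\<lambda>k. c * u k) = c *s p u)
      \<and> (\<forall>u. (\<forall>k\<ge>m. u k = 0) \<longrightarrow> p u \<in> N)
      \<and> (\<forall>x\<in>N. p (i x) = x))"

end

theory Submission
  imports Defs
begin

interpretation rmod: module "(*) :: 'a::comm_ring_1 \<Rightarrow> 'a \<Rightarrow> 'a"
  by unfold_locales (simp_all add: algebra_simps)

lemma dual_subD:
  assumes "f \<in> dual_sub N"
  shows "\<And>x y. x \<in> N \<Longrightarrow> y \<in> N \<Longrightarrow> f (x + y) = f x + f y"
    and "\<And>c x. x \<in> N \<Longrightarrow> f (c *s x) = c * f x"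
    and "\<And>x. x \<notin> N \<Longrightarrow> f x = 0"
  using assms unfolding dual_sub_def by auto

lemma dual_subI:
  assumes "\<And>x y. x \<in> N \<Longrightarrow> y \<in> N \<Longrightarrow> f (x + y) = f x + f y"
    and "\<And>c x. x \<in> N \<Longrightarrow> f (c *s x) = c * f x"
    and "\<And>x. x \<notin> N \<Longrightarrow> f x = 0"
  shows "f \<in> dual_sub N"
  using assms unfolding dual_sub_def by auto

lemma dual_add:
  assumes f: "f \<in> dual_sub N" and g: "g \<in> dual_sub N"
  shows "(\<lambda>x. f x + g x) \<in> dual_sub N"
proof (rule dual_subI)
  fix x y assume "x \<in> N" "y \<in> N"
  then show "f (x + y) + g (x + y) = (f x + g x) + (f y + g y)"
    by (simp add: dual_subD(1)[OF f] dual_subD(1)[OF g] ac_simps)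
next
  fix c x assume "x \<in> N"
  then show "f (c *s x) + g (c *s x) = c * (f x + g x)"
    by (simp add: dual_subD(2)[OF f] dual_subD(2)[OF g] distrib_left)
next
  fix x assume "x \<notin> N"
  then show "f x + g x = 0" by (simp add: dual_subD(3)[OF f] dual_subD(3)[OF g])
qed

lemma dual_mult:
  assumes f: "f \<in> dual_sub N"
  shows "(\<lambda>x. c * f x) \<in> dual_sub N"
proof (rule dual_subI)
  fix x y assume "x \<in> N" "y \<in> N"
  then show "c * f (x + y) = c * f x + c * f y"
    by (simp add: dual_subD(1)[OF f] distrib_left)
next
  fix d x assume "x \<in> N"
  then show "c * f (d *s x) = d * (c * f x)"
    by (simp add: dual_subD(2)[OF f] mult.left_commute)
next
  fix x assume "x \<notin> N"
  then show "c * f x = 0" by (simp add: dual_subD(3)[OF f])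
qed

lemma dual_zero: "(\<lambda>x. 0) \<in> dual_sub N"
  by (rule dual_subI) simp_all

lemma dual_sum: "finite K \<Longrightarrow> (\<And>k. k \<in> K \<Longrightarrow> f k \<in> dual_sub N) \<Longrightarrow> (\<lambda>x. \<Sum>k\<in>K. c k * f k x) \<in> dual_sub N"
proof (induction K rule: finite_induct)
  case empty then show ?case by (simp add: dual_zero)
next
  case (insert k K)
  have "(\<lambda>x. (\<lambda>x. c k * f k x) x + (\<lambda>x. \<Sum>k\<in>K. c k * f k x) x) \<in> dual_sub N"
    by (rule dual_add[OF dual_mult]) (use insert in auto)
  moreover have "(\<lambda>x. \<Sum>k\<in>insert k K. c k * f k x) = (\<lambda>x. (\<lambda>x. c k * f k x) x + (\<lambda>x. \<Sum>k\<in>K. c k * f k x) x)"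
    using insert(1,2) by simp
  ultimately show ?case by simp
qed

lemma am_unf:
  assumes am: "alt_multilinear N \<Phi>" and g: "\<And>j. g j \<in> dual_sub N"
  shows "(\<forall>i. (\<forall>h1\<in>dual_sub N. \<forall>h2\<in>dual_sub N.
                 \<Phi> (g(i := (\<lambda>x. h1 x + h2 x))) = \<Phi> (g(i := h1)) + \<Phi> (g(i := h2)))
           \<and> (\<forall>c. \<forall>h\<in>dual_sub N. \<Phi> (g(i := (\<lambda>x. c * h x))) = c * \<Phi> (g(i := h))))
      \<and> ((\<exists>i j. i \<noteq> j \<and> g i = g j) \<longrightarrow> \<Phi> g = 0)"
proof -
  have all: "\<forall>i. g i \<in> dual_sub N" using g by simp
  show ?thesis by (rule mp[OF spec[OF am[unfolded alt_multilinear_def], of g] all])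
qed

lemma am_add: "alt_multilinear N \<Phi> \<Longrightarrow> (\<And>j. g j \<in> dual_sub N) \<Longrightarrow> h1 \<in> dual_sub N \<Longrightarrow> h2 \<in> dual_sub N
  \<Longrightarrow> \<Phi> (g(i := (\<lambda>x. h1 x + h2 x))) = \<Phi> (g(i := h1)) + \<Phi> (g(i := h2))"
  by (rule bspec[OF bspec[OF conjunct1[OF spec[OF conjunct1[OF am_unf]]]]])

lemma am_scale: "alt_multilinear N \<Phi> \<Longrightarrow> (\<And>j. g j \<in> dual_sub N) \<Longrightarrow> h \<in> dual_sub N
  \<Longrightarrow> \<Phi> (g(i := (\<lambda>x. c * h x))) = c * \<Phi> (g(i := h))"
  by (rule bspec[OF spec[OF conjunct2[OF spec[OF conjunct1[OF am_unf]]]]])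

lemma am_alt: "alt_multilinear N \<Phi> \<Longrightarrow> (\<And>j. g j \<in> dual_sub N) \<Longrightarrow> i \<noteq> j \<Longrightarrow> g i = g j \<Longrightarrow> \<Phi> g = 0"
  by (rule mp[OF conjunct2[OF am_unf]]) blast+

lemma am_zero: "alt_multilinear N \<Phi> \<Longrightarrow> (\<And>j. g j \<in> dual_sub N) \<Longrightarrow> \<Phi> (g(i := (\<lambda>x. 0))) = 0"
  using am_scale[of N \<Phi> g "\<lambda>x. 0" i 0] dual_zero[of N] by simp

lemma am_sum:
  assumes am: "alt_multilinear N \<Phi>" and g: "\<And>j. g j \<in> dual_sub N" and psi: "\<And>k. \<psi> k \<in> dual_sub N"
    and fin: "finite K"
  shows "\<Phi> (g(i := (\<lambda>x. \<Sum>k\<in>K. c k * \<psi> k x))) = (\<Sum>k\<in>K. c k * \<Phi> (g(i := \<psi> k)))"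
  using fin
proof (induction K rule: finite_induct)
  case empty
  have "\<Phi> (g(i := (\<lambda>x. 0))) = 0" by (rule am_zero[OF am]) (rule g)
  then show ?case by (simp only: sum.empty)
next
  case (insert k K)
  have "\<Phi> (g(i := (\<lambda>x. \<Sum>k\<in>insert k K. c k * \<psi> k x))) =
        \<Phi> (g(i := (\<lambda>x. (\<lambda>x. c k * \<psi> k x) x + (\<lambda>x. \<Sum>k\<in>K. c k * \<psi> k x) x)))"
    using insert by simp
  also have "\<dots> = \<Phi> (g(i := (\<lambda>x. c k * \<psi> k x))) + \<Phi> (g(i := (\<lambda>x. \<Sum>k\<in>K. c k * \<psi> k x)))"
    by (rule am_add[OF am g dual_mult[OF psi] dual_sum[OF insert(1) psi]])
  also have "\<Phi> (g(i := (\<lambda>x. c k * \<psi> k x))) = c k * \<Phi> (g(i := \<psi> k))"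
    by (rule am_scale[OF am, where g=g, OF g psi])
  also note insert.IH
  finally show ?case by (simp only: sum.insert[OF insert(1,2)])
qed

lemma am_expand:
  fixes m :: nat
  assumes am: "alt_multilinear N \<Phi>" and psi: "\<And>k. \<psi> k \<in> dual_sub N" and fin: "finite S"
  shows "\<And>h. (\<And>j. h j \<in> dual_sub N) \<Longrightarrow>
    \<Phi> (\<lambda>j. if j \<in> S then (\<lambda>x. \<Sum>k<m. a j k * \<psi> k x) else h j) =
    (\<Sum>\<kappa>\<in>Pi\<^sub>E S (\<lambda>_. {..<m}). (\<Prod>j\<in>S. a j (\<kappa> j)) * \<Phi> (\<lambda>j. if j \<in> S then \<psi> (\<kappa> j) else h j))"
  using fin
proof (induction S rule: finite_induct)
  case empty
  then show ?case by simp
next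
  case (insert j0 S)
  define G where "G = (\<lambda>j. if j \<in> S then (\<lambda>x. \<Sum>k<m. a j k * \<psi> k x) else h j)"
  have G: "G j \<in> dual_sub N" for j
    by (auto simp: G_def insert(4) intro!: dual_sum psi)
  have eq1: "(\<lambda>j. if j \<in> insert j0 S then (\<lambda>x. \<Sum>k<m. a j k * \<psi> k x) else h j)
      = G(j0 := (\<lambda>x. \<Sum>k<m. a j0 k * \<psi> k x))"
    unfolding G_def by (auto simp: fun_eq_iff)
  have eq2: "G(j0 := \<psi> k) = (\<lambda>j. if j \<in> S then (\<lambda>x. \<Sum>k<m. a j k * \<psi> k x) else (h(j0 := \<psi> k)) j)" for k
    unfolding G_def using insert(2) by (auto simp: fun_eq_iff)
  define R where "R = (\<lambda>\<kappa>. (\<Prod>j\<in>insert j0 S. a j (\<kappa> j)) *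
        \<Phi> (\<lambda>j. if j \<in> insert j0 S then \<psi> (\<kappa> j) else h j))"
  have step: "a j0 y * ((\<Prod>j\<in>S. a j (\<kappa> j)) *
        \<Phi> (\<lambda>j. if j \<in> S then \<psi> (\<kappa> j) else (h(j0 := \<psi> y)) j)) = R (\<kappa>(j0 := y))" for y \<kappa>
  proof -
    have 1: "(\<Prod>j\<in>insert j0 S. a j ((\<kappa>(j0 := y)) j)) = a j0 y * (\<Prod>j\<in>S. a j (\<kappa> j))"
    proof -
      have "(\<Prod>j\<in>S. a j ((\<kappa>(j0 := y)) j)) = (\<Prod>j\<in>S. a j (\<kappa> j))"
        by (rule prod.cong) (use insert(2) in auto)
      then show ?thesis using insert(1,2) by simp
    qed
    have 2: "(\<lambda>j. if j \<in> insert j0 S then \<psi> ((\<kappa>(j0 := y)) j) else h j) =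
        (\<lambda>j. if j \<in> S then \<psi> (\<kappa> j) else (h(j0 := \<psi> y)) j)"
      using insert(2) by (auto simp: fun_eq_iff)
    show ?thesis by (simp only: R_def 1 2 mult.assoc)
  qed
  have hk: "(h(j0 := \<psi> k)) j \<in> dual_sub N" for k j
    by (cases "j = j0") (simp_all add: insert(4) psi)
  have "\<Phi> (\<lambda>j. if j \<in> insert j0 S then (\<lambda>x. \<Sum>k<m. a j k * \<psi> k x) else h j)
     = (\<Sum>k<m. a j0 k * \<Phi> (G(j0 := \<psi> k)))"
    unfolding eq1 by (rule am_sum[OF am G psi]) simp
  also have "\<dots> = (\<Sum>k<m. a j0 k * (\<Sum>\<kappa>\<in>Pi\<^sub>E S (\<lambda>_. {..<m}). (\<Prod>j\<in>S. a j (\<kappa> j)) *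
        \<Phi> (\<lambda>j. if j \<in> S then \<psi> (\<kappa> j) else (h(j0 := \<psi> k)) j)))"
    unfolding eq2 using insert(3)[OF hk] by simp
  also have "\<dots> = (\<Sum>(k,\<kappa>)\<in>{..<m} \<times> Pi\<^sub>E S (\<lambda>_. {..<m}). a j0 k * ((\<Prod>j\<in>S. a j (\<kappa> j)) *
        \<Phi> (\<lambda>j. if j \<in> S then \<psi> (\<kappa> j) else (h(j0 := \<psi> k)) j)))"
    by (simp add: sum.cartesian_product sum_distrib_left)
  also have "\<dots> = sum (R \<circ> (\<lambda>(y, g). g(j0 := y))) ({..<m} \<times> Pi\<^sub>E S (\<lambda>_. {..<m}))"
  proof (rule sum.cong[OF refl])
    fix x assume "x \<in> {..<m} \<times> Pi\<^sub>E S (\<lambda>_. {..<m})"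
    obtain y \<kappa> where x: "x = (y, \<kappa>)" by (cases x)
    show "(case x of (k, \<kappa>) \<Rightarrow> a j0 k * ((\<Prod>j\<in>S. a j (\<kappa> j)) *
        \<Phi> (\<lambda>j. if j \<in> S then \<psi> (\<kappa> j) else (h(j0 := \<psi> k)) j))) = (R \<circ> (\<lambda>(y, g). g(j0 := y))) x"
      by (simp only: x prod.case comp_def) (rule step)
  qed
  also have "\<dots> = sum R (Pi\<^sub>E (insert j0 S) (\<lambda>_. {..<m}))"
    unfolding PiE_insert_eq by (rule sum.reindex[OF inj_combinator[OF insert(2)], symmetric])
  also have "\<dots> = (\<Sum>\<kappa>\<in>Pi\<^sub>E (insert j0 S) (\<lambda>_. {..<m}). (\<Prod>j\<in>insert j0 S. a j (\<kappa> j)) *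
        \<Phi> (\<lambda>j. if j \<in> insert j0 S then \<psi> (\<kappa> j) else h j))"
    unfolding R_def ..
  finally show ?case .
qed

lemma am_swap:
  assumes am: "alt_multilinear N \<Phi>" and g: "\<And>j. g j \<in> dual_sub N" and ab: "a \<noteq> b"
  shows "\<Phi> (g \<circ> Transposition.transpose a b) = - \<Phi> g"
proof -
  define s where "s = (\<lambda>x. g a x + g b x)"
  have s: "s \<in> dual_sub N" unfolding s_def by (rule dual_add[OF g g])
  have gu: "\<And>j. (g(c := f)) j \<in> dual_sub N" if "f \<in> dual_sub N" for c f
    using g that by auto
  have sadd: "\<Phi> (G(c := s)) = \<Phi> (G(c := g a)) + \<Phi> (G(c := g b))" if "\<And>j. G j \<in> dual_sub N" for G c
    unfolding s_def by (rule am_add[OF am that g g])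
  have "0 = \<Phi> ((g(b := s))(a := s))"
    by (rule am_alt[OF am, of _ a b, symmetric]) (simp_all add: ab g s)
  also have "\<dots> = \<Phi> ((g(b := s))(a := g a)) + \<Phi> ((g(b := s))(a := g b))"
    by (rule sadd[OF gu[OF s]])
  also have "(g(b := s))(a := g a) = (g(a := g a))(b := s)" using ab by (auto simp: fun_eq_iff)
  also have "(g(b := s))(a := g b) = (g(a := g b))(b := s)" using ab by (auto simp: fun_eq_iff)
  also have "\<Phi> ((g(a := g a))(b := s)) = \<Phi> ((g(a := g a))(b := g a)) + \<Phi> ((g(a := g a))(b := g b))"
    by (rule sadd[OF gu[OF g]])
  also have "\<Phi> ((g(a := g b))(b := s)) = \<Phi> ((g(a := g b))(b := g a)) + \<Phi> ((g(a := g b))(b := g b))"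
    by (rule sadd[OF gu[OF g]])
  also have "\<Phi> ((g(a := g a))(b := g a)) = 0"
    by (rule am_alt[OF am, of _ a b]) (simp_all add: ab g)
  also have "\<Phi> ((g(a := g b))(b := g b)) = 0"
    by (rule am_alt[OF am, of _ a b]) (simp_all add: ab g)
  also have "(g(a := g a))(b := g b) = g" by auto
  also have "(g(a := g b))(b := g a) = g \<circ> Transposition.transpose a b"
    using ab by (auto simp: fun_eq_iff Transposition.transpose_def)
  finally show ?thesis by (simp add: algebra_simps eq_neg_iff_add_eq_0 comp_def)
qed

lemma am_perm_aux:
  assumes am: "alt_multilinear N \<Phi>" and p: "p permutes (UNIV :: 'n::finite set)"
  shows "\<forall>g. (\<forall>j. g j \<in> dual_sub N) \<longrightarrow> \<Phi> (g \<circ> p) = of_int (sign p) * \<Phi> g"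
  using p finite[of "UNIV :: 'n set"]
proof (induction p rule: permutes_induct)
  case id
  then show ?case by (simp add: sign_id)
next
  case (swap a b p)
  have IH: "\<forall>g. (\<forall>j. g j \<in> dual_sub N) \<longrightarrow> \<Phi> (g \<circ> p) = of_int (sign p) * \<Phi> g" by fact
  have pp: "p permutes UNIV" by fact
  have ab: "a \<noteq> b" by fact
  show ?case
  proof (intro allI impI)
    fix g :: "'n \<Rightarrow> _" assume gD: "\<forall>j. g j \<in> dual_sub N"
    have gt: "\<forall>j. (g \<circ> Transposition.transpose a b) j \<in> dual_sub N" using gD by simp
    have "\<Phi> (g \<circ> (Transposition.transpose a b \<circ> p)) = \<Phi> ((g \<circ> Transposition.transpose a b) \<circ> p)"
      by (simp add: o_assoc)
    also have "\<dots> = of_int (sign p) * \<Phi> (g \<circ> Transposition.transpose a b)"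
      using IH gt by blast
    also have "\<dots> = - of_int (sign p) * \<Phi> g" using am_swap[OF am _ ab, of g] gD by simp
    also have "sign (Transposition.transpose a b \<circ> p) = - sign p"
      using sign_compose[OF permutation_swap_id permutes_imp_permutation[OF finite pp], of a b] ab
      by (simp add: sign_swap_id)
    ultimately show "\<Phi> (g \<circ> (Transposition.transpose a b \<circ> p)) = of_int (sign (Transposition.transpose a b \<circ> p)) * \<Phi> g"
      by simp
  qed
qed

lemma am_perm:
  assumes am: "alt_multilinear N \<Phi>" and p: "p permutes (UNIV :: 'n::finite set)"
    and g: "\<And>j. g j \<in> dual_sub N"
  shows "\<Phi> (g \<circ> p) = of_int (sign p) * \<Phi> g"
  using am_perm_aux[OF am p] g by blast

lemma am_intro:
  fixes \<Phi> :: "('n::finite \<Rightarrow> ('a::comm_ring_1)^'n \<Rightarrow> 'a) \<Rightarrow> 'a"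
  assumes A: "\<And>g i h1 h2. (\<And>j. g j \<in> dual_sub N) \<Longrightarrow> h1 \<in> dual_sub N \<Longrightarrow> h2 \<in> dual_sub N \<Longrightarrow>
      \<Phi> (g(i := (\<lambda>x. h1 x + h2 x))) = \<Phi> (g(i := h1)) + \<Phi> (g(i := h2))"
    and S: "\<And>g i c h. (\<And>j. g j \<in> dual_sub N) \<Longrightarrow> h \<in> dual_sub N \<Longrightarrow>
      \<Phi> (g(i := (\<lambda>x. c * h x))) = c * \<Phi> (g(i := h))"
    and Z: "\<And>g i j. (\<And>j. g j \<in> dual_sub N) \<Longrightarrow> i \<noteq> j \<Longrightarrow> g i = g j \<Longrightarrow> \<Phi> g = 0"
  shows "alt_multilinear N \<Phi>"
  unfolding alt_multilinear_def
proof (intro allI impI conjI ballI)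
  fix g :: "'n \<Rightarrow> 'a^'n \<Rightarrow> 'a" and i h1 h2 assume g: "\<forall>i. g i \<in> dual_sub N" and h: "h1 \<in> dual_sub N" "h2 \<in> dual_sub N"
  show "\<Phi> (g(i := (\<lambda>x. h1 x + h2 x))) = \<Phi> (g(i := h1)) + \<Phi> (g(i := h2))"
    by (rule A) (use g h in simp_all)
next
  fix g :: "'n \<Rightarrow> 'a^'n \<Rightarrow> 'a" and i c h assume g: "\<forall>i. g i \<in> dual_sub N" and h: "h \<in> dual_sub N"
  show "\<Phi> (g(i := (\<lambda>x. c * h x))) = c * \<Phi> (g(i := h))"
    by (rule S) (use g h in simp_all)
next
  fix g :: "'n \<Rightarrow> 'a^'n \<Rightarrow> 'a" assume g: "\<forall>i. g i \<in> dual_sub N" and e: "\<exists>i j. i \<noteq> j \<and> g i = g j"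
  from e obtain i j where "i \<noteq> j" "g i = g j" by blast
  then show "\<Phi> g = 0" by (intro Z[of g i j]) (use g in simp_all)
qed

lemma char_idealI: "alt_multilinear N \<Phi> \<Longrightarrow> \<Phi> (\<lambda>i x. if x \<in> N then x $ i else 0) \<in> char_ideal N"
  unfolding char_ideal_def by (rule CollectI, rule exI[where x=\<Phi>], simp)

lemma char_idealE:
  assumes "z \<in> char_ideal N"
  obtains \<Phi> where "alt_multilinear N \<Phi>" "z = \<Phi> (\<lambda>i x. if x \<in> N then x $ i else 0)"
  using assms unfolding char_ideal_def by blast

lemma char_subspace: "rmod.subspace (char_ideal (N :: ('a::comm_ring_1^'n) set))"
proof -
  have z: "alt_multilinear N (\<lambda>g. 0)"
    by (rule am_intro) simp_all
  have a: "alt_multilinear N (\<lambda>g. \<Phi>1 g + \<Phi>2 g)" if a1: "alt_multilinear N \<Phi>1" and a2: "alt_multilinear N \<Phi>2" for \<Phi>1 \<Phi>2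
  proof (rule am_intro)
    fix g :: "'n \<Rightarrow> 'a^'n \<Rightarrow> 'a" and i h1 h2 assume "\<And>j. g j \<in> dual_sub N" "h1 \<in> dual_sub N" "h2 \<in> dual_sub N"
    then show "\<Phi>1 (g(i := \<lambda>x. h1 x + h2 x)) + \<Phi>2 (g(i := \<lambda>x. h1 x + h2 x)) =
      \<Phi>1 (g(i := h1)) + \<Phi>2 (g(i := h1)) + (\<Phi>1 (g(i := h2)) + \<Phi>2 (g(i := h2)))"
      by (simp only: am_add[OF a1] am_add[OF a2] ac_simps)
  next
    fix g :: "'n \<Rightarrow> 'a^'n \<Rightarrow> 'a" and i c h assume "\<And>j. g j \<in> dual_sub N" "h \<in> dual_sub N"
    then show "\<Phi>1 (g(i := \<lambda>x. c * h x)) + \<Phi>2 (g(i := \<lambda>x. c * h x)) = c * (\<Phi>1 (g(i := h)) + \<Phi>2 (g(i := h)))"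
      by (simp only: am_scale[OF a1] am_scale[OF a2] distrib_left)
  next
    fix g :: "'n \<Rightarrow> 'a^'n \<Rightarrow> 'a" and i j assume "\<And>j. g j \<in> dual_sub N" "i \<noteq> j" "g i = g j"
    then show "\<Phi>1 g + \<Phi>2 g = 0"
      using am_alt[OF a1, of g i j] am_alt[OF a2, of g i j] by simp
  qed
  have m: "alt_multilinear N (\<lambda>g. c * \<Phi> g)" if a1: "alt_multilinear N \<Phi>" for \<Phi> c
  proof (rule am_intro)
    fix g :: "'n \<Rightarrow> 'a^'n \<Rightarrow> 'a" and i h1 h2 assume "\<And>j. g j \<in> dual_sub N" "h1 \<in> dual_sub N" "h2 \<in> dual_sub N"
    then show "c * \<Phi> (g(i := \<lambda>x. h1 x + h2 x)) = c * \<Phi> (g(i := h1)) + c * \<Phi> (g(i := h2))"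
      by (simp only: am_add[OF a1] distrib_left)
  next
    fix g :: "'n \<Rightarrow> 'a^'n \<Rightarrow> 'a" and i d h assume "\<And>j. g j \<in> dual_sub N" "h \<in> dual_sub N"
    then show "c * \<Phi> (g(i := \<lambda>x. d * h x)) = d * (c * \<Phi> (g(i := h)))"
      by (simp only: am_scale[OF a1] mult.left_commute)
  next
    fix g :: "'n \<Rightarrow> 'a^'n \<Rightarrow> 'a" and i j assume "\<And>j. g j \<in> dual_sub N" "i \<noteq> j" "g i = g j"
    then show "c * \<Phi> g = 0"
      using am_alt[OF a1, of g i j] by simp
  qed
  show ?thesis
    unfolding rmod.subspace_def
  proof (intro conjI ballI allI)
    show "0 \<in> char_ideal N" using char_idealI[OF z] by simp
  next
    fix x y assume x: "x \<in> char_ideal N" and y: "y \<in> char_ideal N"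
    obtain \<Phi>1 where p1: "alt_multilinear N \<Phi>1" "x = \<Phi>1 (\<lambda>i x. if x \<in> N then x $ i else 0)"
      using x by (rule char_idealE)
    obtain \<Phi>2 where p2: "alt_multilinear N \<Phi>2" "y = \<Phi>2 (\<lambda>i x. if x \<in> N then x $ i else 0)"
      using y by (rule char_idealE)
    show "x + y \<in> char_ideal N" using char_idealI[OF a[OF p1(1) p2(1)]] unfolding p1(2) p2(2) .
  next
    fix c x assume x: "x \<in> char_ideal N"
    obtain \<Phi> where p: "alt_multilinear N \<Phi>" "x = \<Phi> (\<lambda>i x. if x \<in> N then x $ i else 0)"
      using x by (rule char_idealE)
    show "c * x \<in> char_ideal N" using char_idealI[OF m[OF p(1)]] unfolding p(2) .
  qed
qed

lemma am_det: "alt_multilinear N (\<lambda>g. det ((\<chi> j. \<chi> l. g j (v l)) :: 'a::comm_ring_1^'n^'n))"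
proof -
  show ?thesis
    unfolding alt_multilinear_def
  proof (intro allI impI conjI ballI)
    fix g i h1 h2
    have "det ((\<chi> j l. (g(i := \<lambda>x. h1 x + h2 x)) j (v l)) :: 'a^'n^'n)
        = det ((\<chi> j. if j = i then (\<chi> l. h1 (v l)) + (\<chi> l. h2 (v l)) else (\<chi> l. g j (v l))) :: 'a^'n^'n)"
      by (rule arg_cong[where f=det]) (simp add: vec_eq_iff)
    also have "\<dots> = det ((\<chi> j. if j = i then (\<chi> l. h1 (v l)) else (\<chi> l. g j (v l))) :: 'a^'n^'n)
        + det ((\<chi> j. if j = i then (\<chi> l. h2 (v l)) else (\<chi> l. g j (v l))) :: 'a^'n^'n)"
      by (rule det_row_add)
    also have "det ((\<chi> j. if j = i then (\<chi> l. h1 (v l)) else (\<chi> l. g j (v l))) :: 'a^'n^'n)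
        = det ((\<chi> j l. (g(i := h1)) j (v l)) :: 'a^'n^'n)"
      by (rule arg_cong[where f=det]) (simp add: vec_eq_iff)
    also have "det ((\<chi> j. if j = i then (\<chi> l. h2 (v l)) else (\<chi> l. g j (v l))) :: 'a^'n^'n)
        = det ((\<chi> j l. (g(i := h2)) j (v l)) :: 'a^'n^'n)"
      by (rule arg_cong[where f=det]) (simp add: vec_eq_iff)
    finally show "det (\<chi> j l. (g(i := \<lambda>x. h1 x + h2 x)) j (v l)) = det (\<chi> j l. (g(i := h1)) j (v l)) + det (\<chi> j l. (g(i := h2)) j (v l))" .
  next
    fix g i c h
    have "det ((\<chi> j l. (g(i := \<lambda>x. c * h x)) j (v l)) :: 'a^'n^'n)
        = det ((\<chi> j. if j = i then c *s (\<chi> l. h (v l)) else (\<chi> l. g j (v l))) :: 'a^'n^'n)"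
      by (rule arg_cong[where f=det]) (simp add: vec_eq_iff)
    also have "\<dots> = c * det ((\<chi> j. if j = i then (\<chi> l. h (v l)) else (\<chi> l. g j (v l))) :: 'a^'n^'n)"
      by (rule det_row_mul)
    also have "det ((\<chi> j. if j = i then (\<chi> l. h (v l)) else (\<chi> l. g j (v l))) :: 'a^'n^'n)
        = det ((\<chi> j l. (g(i := h)) j (v l)) :: 'a^'n^'n)"
      by (rule arg_cong[where f=det]) (simp add: vec_eq_iff)
    finally show "det (\<chi> j l. (g(i := \<lambda>x. c * h x)) j (v l)) = c * det (\<chi> j l. (g(i := h)) j (v l))" .
  next
    fix g :: "'n \<Rightarrow> 'a^'n \<Rightarrow> 'a"
    assume "\<exists>i j. i \<noteq> j \<and> g i = g j"
    then obtain i j where "i \<noteq> j" "g i = g j" by blast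
    then show "det (\<chi> j l. g j (v l)) = 0"
      by (intro det_identical_rows[of i j]) (auto simp: row_def vec_eq_iff)
  qed
qed

lemma fitt0_sub_char: "fitt0 N \<subseteq> char_ideal (N :: ('a::comm_ring_1^'n) set)"
  unfolding fitt0_def
proof (rule rmod.span_minimal[OF _ char_subspace], safe)
  fix v :: "'n \<Rightarrow> 'a^'n" assume v: "\<forall>i. v i \<in> N"
  have "(\<chi> j l. (\<lambda>i x. if x \<in> N then x $ i else 0) j (v l)) = transpose (\<chi> i. v i)"
    using v by (simp add: vec_eq_iff transpose_def)
  then have e: "det (\<chi> i. v i) = (\<lambda>g. det ((\<chi> j. \<chi> l. g j (v l)) :: 'a^'n^'n)) (\<lambda>i x. if x \<in> N then x $ i else 0)"
    by simp
  have "alt_multilinear N (\<lambda>g. det ((\<chi> j. \<chi> l. g j (v l)) :: 'a^'n^'n))" by (rule am_det)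
  then show "det (\<chi> i. v i) \<in> char_ideal N"
    unfolding char_ideal_def mem_Collect_eq
    by (intro exI[where x="\<lambda>g. det ((\<chi> j. \<chi> l. g j (v l)) :: 'a^'n^'n)"] conjI e)
qed

lemma char_sub_fitt0:
  fixes N :: "('a::comm_ring_1^'n) set"
  assumes Nadd: "\<And>x y. x \<in> N \<Longrightarrow> y \<in> N \<Longrightarrow> x + y \<in> N"
    and Nscale: "\<And>c x. x \<in> N \<Longrightarrow> c *s x \<in> N"
    and proj: "fg_projective N"
  shows "char_ideal N \<subseteq> fitt0 N"
proof -
  obtain m :: nat and i :: "'a ^ 'n \<Rightarrow> (nat \<Rightarrow> 'a)" and p :: "(nat \<Rightarrow> 'a) \<Rightarrow> 'a ^ 'n" where
    i_add: "\<forall>x\<in>N. \<forall>y\<in>N. i (x + y) = (\<lambda>k. i x k + i y k)" and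
    i_sc: "\<forall>c. \<forall>x\<in>N. i (c *s x) = (\<lambda>k. c * i x k)" and
    i_supp: "\<forall>x\<in>N. \<forall>k\<ge>m. i x k = 0" and
    p_add: "\<forall>u v. p (\<lambda>k. u k + v k) = p u + p v" and
    p_sc: "\<forall>c u. p (\<lambda>k. c * u k) = c *s p u" and
    p_N: "\<forall>u. (\<forall>k\<ge>m. u k = 0) \<longrightarrow> p u \<in> N" and
    p_i: "\<forall>x\<in>N. p (i x) = x"
    using proj unfolding fg_projective_def by (elim exE conjE) (rule that)
  define \<delta> where "\<delta> k = (\<lambda>l::nat. if l = k then (1::'a) else 0)" for k
  define u where "u k = p (\<delta> k)" for k
  define \<phi> where "\<phi> k = (\<lambda>x. if x \<in> N then i x k else 0)" for k
  have p0: "p (\<lambda>l. 0) = 0"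
    using p_sc[rule_format, of 0 "\<lambda>l. 0"] by simp
  have psum: "p (\<lambda>l. \<Sum>k\<in>K. c k * \<delta> k l) = (\<Sum>k\<in>K. c k *s u k)" if "finite K" for K c
    using that
  proof (induction K rule: finite_induct)
    case empty then show ?case using p0 by simp
  next
    case (insert k K)
    have "p (\<lambda>l. \<Sum>k\<in>insert k K. c k * \<delta> k l) = p (\<lambda>l. (\<lambda>l. c k * \<delta> k l) l + (\<lambda>l. \<Sum>k\<in>K. c k * \<delta> k l) l)"
      using insert by simp
    also have "\<dots> = p (\<lambda>l. c k * \<delta> k l) + p (\<lambda>l. \<Sum>k\<in>K. c k * \<delta> k l)"
      by (rule p_add[rule_format])
    also have "p (\<lambda>l. c k * \<delta> k l) = c k *s u k"
      unfolding u_def by (rule p_sc[rule_format])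
    finally show ?case using insert by simp
  qed
  have xrep: "x $ j = (\<Sum>k<m. u k $ j * i x k)" if x: "x \<in> N" for x j
  proof -
    have "i x = (\<lambda>l. \<Sum>k<m. i x k * \<delta> k l)"
    proof
      fix l
      have e: "i x k * \<delta> k l = (if k = l then i x l else 0)" for k
        by (simp add: \<delta>_def)
      have "(\<Sum>k<m. i x k * \<delta> k l) = (\<Sum>k<m. (if k = l then i x l else 0))"
        by (simp only: e)
      also have "\<dots> = (if l \<in> {..<m} then i x l else 0)"
        by (rule sum.delta) simp
      also have "\<dots> = i x l" using i_supp x by auto
      finally show "i x l = (\<Sum>k<m. i x k * \<delta> k l)" ..
    qed
    then have "x = (\<Sum>k<m. i x k *s u k)"
      using p_i x psum[of "{..<m}" "i x"] by simp
    then have "x $ j = (\<Sum>k<m. i x k *s u k) $ j" by simp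
    then show ?thesis by (simp add: mult.commute)
  qed
  have uN: "u k \<in> N" if "k < m" for k
    unfolding u_def by (rule p_N[rule_format]) (use that in \<open>simp add: \<delta>_def\<close>)
  have \<phi>D: "\<phi> k \<in> dual_sub N" for k
  proof (rule dual_subI)
    fix x y assume "x \<in> N" "y \<in> N"
    then show "\<phi> k (x + y) = \<phi> k x + \<phi> k y"
      unfolding \<phi>_def using Nadd i_add by simp
  next
    fix c x assume "x \<in> N"
    then show "\<phi> k (c *s x) = c * \<phi> k x"
      unfolding \<phi>_def using Nscale i_sc by simp
  next
    fix x assume "x \<notin> N"
    then show "\<phi> k x = 0" unfolding \<phi>_def by simp
  qed
  have estar: "(\<lambda>j x. if x \<in> N then x $ j else 0) =
      (\<lambda>j. if j \<in> UNIV then (\<lambda>x. \<Sum>k<m. (u k $ j) * \<phi> k x) else (\<lambda>x. 0))"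
  proof (intro ext)
    fix j x
    show "(if x \<in> N then x $ j else 0) = (if j \<in> UNIV then (\<lambda>x. \<Sum>k<m. (u k $ j) * \<phi> k x) else (\<lambda>x. 0)) x"
    proof (cases "x \<in> N")
      case True
      then show ?thesis unfolding xrep[OF True, of j] by (simp add: \<phi>_def)
    next
      case False
      then show ?thesis by (simp add: \<phi>_def)
    qed
  qed
  show ?thesis
  proof
    fix z assume "z \<in> char_ideal N"
    then obtain \<Phi> where am: "alt_multilinear N \<Phi>" and z: "z = \<Phi> (\<lambda>j x. if x \<in> N then x $ j else 0)"
      by (rule char_idealE)
    define P where "P = Pi\<^sub>E (UNIV :: 'n set) (\<lambda>_. {..<m})"
    define T where "T \<kappa> = (\<Prod>j\<in>UNIV. u (\<kappa> j) $ j) * \<Phi> (\<lambda>j. \<phi> (\<kappa> j))" for \<kappa>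
    define Q where "Q = {\<kappa>\<in>P. inj \<kappa>}"
    have finP: "finite P" unfolding P_def by (simp add: finite_PiE)
    have ex: "\<Phi> (\<lambda>j. if j \<in> UNIV then (\<lambda>x. \<Sum>k<m. (u k $ j) * \<phi> k x) else (\<lambda>x. 0)) =
      (\<Sum>\<kappa>\<in>Pi\<^sub>E UNIV (\<lambda>_. {..<m}). (\<Prod>j\<in>UNIV. u (\<kappa> j) $ j) * \<Phi> (\<lambda>j. if j \<in> UNIV then \<phi> (\<kappa> j) else (\<lambda>x. 0)))"
      by (rule am_expand[OF am \<phi>D finite]) (rule dual_zero)
    have "z = (\<Sum>\<kappa>\<in>P. T \<kappa>)"
      unfolding z estar ex P_def T_def by simp
    also have "\<dots> = (\<Sum>\<kappa>\<in>Q. T \<kappa>)"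
    proof (rule sum.mono_neutral_right[OF finP])
      show "Q \<subseteq> P" unfolding Q_def by auto
      show "\<forall>\<kappa>\<in>P - Q. T \<kappa> = 0"
      proof
        fix \<kappa> assume "\<kappa> \<in> P - Q"
        then obtain a b where "a \<noteq> b" "\<kappa> a = \<kappa> b" unfolding Q_def inj_def by auto
        then have "\<Phi> (\<lambda>j. \<phi> (\<kappa> j)) = 0"
          by (intro am_alt[OF am, of _ a b]) (auto simp: \<phi>D)
        then show "T \<kappa> = 0" unfolding T_def by simp
      qed
    qed
    also have "\<dots> = (\<Sum>y\<in>Pow {..<m}. \<Sum>\<kappa>\<in>{\<kappa>. \<kappa> \<in> Q \<and> range \<kappa> = y}. T \<kappa>)"
    proof (rule sum.group[symmetric])
      show "finite Q" unfolding Q_def using finP by simp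
      show "finite (Pow {..<m})" by simp
      show "range ` Q \<subseteq> Pow {..<m}" unfolding Q_def P_def by (auto simp: PiE_iff)
    qed
    also have "\<dots> \<in> fitt0 N"
      unfolding fitt0_def
    proof (rule rmod.span_sum)
      fix y assume "y \<in> Pow {..<m}"
      define Orb where "Orb = {\<kappa>. \<kappa> \<in> Q \<and> range \<kappa> = y}"
      have "(\<Sum>\<kappa>\<in>Orb. T \<kappa>) \<in> rmod.span {det (\<chi> i. v i) |v. \<forall>i. v i \<in> N}"
      proof (cases "Orb = {}")
        case True then show ?thesis by (simp add: rmod.span_zero)
      next
        case False
        then obtain \<kappa>0 where k0: "\<kappa>0 \<in> Orb" by blast
        then have k0inj: "inj \<kappa>0" and k0m: "\<And>j. \<kappa>0 j < m" and k0y: "range \<kappa>0 = y"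
          unfolding Orb_def Q_def P_def by auto
        have Oeq: "Orb = (\<lambda>\<sigma>. \<kappa>0 \<circ> \<sigma>) ` {\<sigma>. \<sigma> permutes (UNIV :: 'n set)}"
        proof safe
          fix \<kappa> assume "\<kappa> \<in> Orb"
          then have kinj: "inj \<kappa>" and ky: "range \<kappa> = y"
            unfolding Orb_def Q_def by auto
          define \<sigma> where "\<sigma> = inv \<kappa>0 \<circ> \<kappa>"
          have kk: "\<kappa>0 (\<sigma> j) = \<kappa> j" for j
            unfolding \<sigma>_def using ky k0y by (auto intro: f_inv_into_f)
          have "bij \<sigma>"
          proof (rule bijI)
            show "inj \<sigma>" by (metis injI kinj kk injD)
            show "surj \<sigma>"
            proof -
              have "j \<in> range \<sigma>" for j
              proof -
                have "\<kappa>0 j \<in> range \<kappa>" using ky k0y by auto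
                then obtain j' where "\<kappa> j' = \<kappa>0 j" by auto
                then have "\<sigma> j' = j" using kk k0inj by (metis injD)
                then show ?thesis by auto
              qed
              then show ?thesis by auto
            qed
          qed
          then have "\<sigma> permutes UNIV" by (intro bij_imp_permutes) auto
          moreover have "\<kappa> = \<kappa>0 \<circ> \<sigma>" using kk by (auto simp: fun_eq_iff)
          ultimately show "\<kappa> \<in> (\<lambda>\<sigma>. \<kappa>0 \<circ> \<sigma>) ` {\<sigma>. \<sigma> permutes UNIV}" by blast
        next
          fix \<sigma> :: "'n \<Rightarrow> 'n" assume s: "\<sigma> permutes UNIV"
          have "inj (\<kappa>0 \<circ> \<sigma>)" using k0inj permutes_inj[OF s] by (rule inj_compose)
          moreover have "range (\<kappa>0 \<circ> \<sigma>) = y"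
            using k0y permutes_image[OF s] by (simp only: image_comp[symmetric])
          ultimately show "\<kappa>0 \<circ> \<sigma> \<in> Orb"
            unfolding Orb_def Q_def P_def using k0m by auto
        qed
        have injc: "inj_on (\<lambda>\<sigma>. \<kappa>0 \<circ> \<sigma>) {\<sigma>. \<sigma> permutes (UNIV :: 'n set)}"
        proof (rule inj_onI)
          fix \<sigma>1 \<sigma>2 :: "'n \<Rightarrow> 'n" assume "\<kappa>0 \<circ> \<sigma>1 = \<kappa>0 \<circ> \<sigma>2"
          then show "\<sigma>1 = \<sigma>2" by (simp add: fun_eq_iff inj_eq[OF k0inj])
        qed
        define \<Phi>0 where "\<Phi>0 = \<Phi> (\<lambda>j. \<phi> (\<kappa>0 j))"
        have Tk: "T (\<kappa>0 \<circ> \<sigma>) = of_int (sign \<sigma>) * (\<Prod>j\<in>UNIV. u (\<kappa>0 (\<sigma> j)) $ j) * \<Phi>0"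
          if s: "\<sigma> permutes UNIV" for \<sigma>
        proof -
          have "\<Phi> (\<lambda>j. \<phi> ((\<kappa>0 \<circ> \<sigma>) j)) = \<Phi> ((\<lambda>j. \<phi> (\<kappa>0 j)) \<circ> \<sigma>)" by (simp add: comp_def)
          also have "\<dots> = of_int (sign \<sigma>) * \<Phi>0"
            unfolding \<Phi>0_def by (rule am_perm[OF am s]) (rule \<phi>D)
          finally have e: "\<Phi> (\<lambda>j. \<phi> ((\<kappa>0 \<circ> \<sigma>) j)) = of_int (sign \<sigma>) * \<Phi>0" .
          show ?thesis unfolding T_def e by (simp only: comp_apply mult_ac)
        qed
        have "(\<Sum>\<kappa>\<in>Orb. T \<kappa>) = (\<Sum>\<sigma>\<in>{\<sigma>. \<sigma> permutes (UNIV :: 'n set)}. T (\<kappa>0 \<circ> \<sigma>))"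
          unfolding Oeq by (subst sum.reindex[OF injc]) (simp add: comp_def)
        also have "\<dots> = (\<Sum>\<sigma>\<in>{\<sigma>. \<sigma> permutes (UNIV :: 'n set)}. of_int (sign \<sigma>) * (\<Prod>j\<in>UNIV. u (\<kappa>0 (\<sigma> j)) $ j)) * \<Phi>0"
          by (simp add: Tk sum_distrib_right)
        also have "(\<Sum>\<sigma>\<in>{\<sigma>. \<sigma> permutes (UNIV :: 'n set)}. of_int (sign \<sigma>) * (\<Prod>j\<in>UNIV. u (\<kappa>0 (\<sigma> j)) $ j))
            = det ((\<chi> j l. u (\<kappa>0 l) $ j) :: 'a^'n^'n)"
          unfolding det_def by simp
        also have "((\<chi> j l. u (\<kappa>0 l) $ j) :: 'a^'n^'n) = transpose (\<chi> l. u (\<kappa>0 l))"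
          by (simp add: transpose_def)
        also have "det (transpose ((\<chi> l. u (\<kappa>0 l)) :: 'a^'n^'n)) * \<Phi>0 = \<Phi>0 * det (\<chi> l. u (\<kappa>0 l))"
          by (simp add: mult.commute)
        finally have eq: "(\<Sum>\<kappa>\<in>Orb. T \<kappa>) = \<Phi>0 * det ((\<chi> l. u (\<kappa>0 l)) :: 'a^'n^'n)" .
        have "det ((\<chi> l. u (\<kappa>0 l)) :: 'a^'n^'n) \<in> rmod.span {det (\<chi> i. v i) |v. \<forall>i. v i \<in> N}"
          by (rule rmod.span_base) (use uN k0m in blast)
        then show ?thesis unfolding eq by (rule rmod.span_scale)
      qed
      then show "(\<Sum>\<kappa>\<in>{\<kappa>. \<kappa> \<in> Q \<and> range \<kappa> = y}. T \<kappa>) \<in> rmod.span {det (\<chi> i. v i) |v. \<forall>i. v i \<in> N}"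
        unfolding Orb_def .
    qed
    finally show "z \<in> fitt0 N" .
  qed
qed

theorem propositionC7:
  fixes scale :: "'a::comm_ring_1 \<Rightarrow> 'm::ab_group_add \<Rightarrow> 'm"
    and \<pi> :: "'a ^ 'n \<Rightarrow> 'm"
  assumes noeth: "noetherian_ring TYPE('a)"
    and M_module: "module scale"
    and M_fg: "\<exists>S. finite S \<and> module.span scale S = UNIV"
    and pres_hom: "module_hom (*s) scale \<pi>"
    and pres_surj: "surj \<pi>"
  shows "fitt0 {x. \<pi> x = 0} \<subseteq> char_ideal {x. \<pi> x = 0}
         \<and> (fg_projective {x. \<pi> x = 0} \<longrightarrow> fitt0 {x. \<pi> x = 0} = char_ideal {x. \<pi> x = 0})"
proof -
  have Nadd: "x + y \<in> {x. \<pi> x = 0}" if "x \<in> {x. \<pi> x = 0}" "y \<in> {x. \<pi> x = 0}" for x y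
    using that module_hom.add[OF pres_hom, of x y] by simp
  have Nscale: "c *s x \<in> {x. \<pi> x = 0}" if "x \<in> {x. \<pi> x = 0}" for c x
    using that module_hom.scale[OF pres_hom, of c x] module.scale_zero_right[OF M_module, of c] by simp
  have 1: "fitt0 {x. \<pi> x = 0} \<subseteq> char_ideal {x. \<pi> x = 0}" by (rule fitt0_sub_char)
  show ?thesis
  proof (intro conjI impI)
    show "fitt0 {x. \<pi> x = 0} \<subseteq> char_ideal {x. \<pi> x = 0}" by (rule 1)
  next
    assume pr: "fg_projective {x. \<pi> x = 0}"
    have "char_ideal {x. \<pi> x = 0} \<subseteq> fitt0 {x. \<pi> x = 0}"
      using Nadd Nscale pr by (rule char_sub_fitt0)
    with 1 show "fitt0 {x. \<pi> x = 0} = char_ideal {x. \<pi> x = 0}" by (rule subset_antisym)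
  qed
qed

end
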